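(* Let $d\in\mathbb N$ and let $\rho:SL(2,\mathbb Z)\to GL(d,\mathbb C)$ be a representation such that $\rho(T)$ is diagonalisable with eigenvalues $\lambda_1,\dots,\lambda_d$ (with multiplicity), where $T=\begin{pmatrix}1&1\\0&1\end{pmatrix}$. If no product $\prod_{i\in I}\lambda_i$ over a non-empty proper subset $I\subsetneq\{1,\dots,d\}$ is a $12$th root of unity, then $\rho$ is irreducible. *)

theory Defs
  imports "HOL-Analysis.Analysis"
begin

definition SL2Z :: "(int^2^2) set" where
  "SL2Z = {A. det A = 1}"

definition T_mat :: "int^2^2" where
  "T_mat = vector [vector [1, 1], vector [0, 1]]"

definition is_rep :: "(int^2^2 \<Rightarrow> complex^'n^'n) \<Rightarrow> bool" where
  "is_rep \<rho> \<longleftrightarrow>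
     (\<forall>A\<in>SL2Z. invertible (\<rho> A)) \<and>
     (\<forall>A\<in>SL2Z. \<forall>B\<in>SL2Z. \<rho> (A ** B) = \<rho> A ** \<rho> B)"

definition irreducible_rep :: "(int^2^2 \<Rightarrow> complex^'n^'n) \<Rightarrow> bool" where
  "irreducible_rep \<rho> \<longleftrightarrow>
     (\<forall>W. vec.subspace W \<and> (\<forall>g\<in>SL2Z. \<forall>w\<in>W. \<rho> g *v w \<in> W)
        \<longrightarrow> W = {0} \<or> W = UNIV)"

end

theory Submission
  imports Defs
begin

lemma minv: fixes A :: "'a::semiring_1^'n^'n" assumes "invertible A"
  shows "A ** matrix_inv A = mat 1" "matrix_inv A ** A = mat 1"
proof -
  have "\<exists>A'. A ** A' = mat 1 \<and> A' ** A = mat 1" using assms unfolding invertible_def by blast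
  from someI_ex[OF this] show "A ** matrix_inv A = mat 1" "matrix_inv A ** A = mat 1"
    unfolding matrix_inv_def by auto
qed

definition pad :: "'n set \<Rightarrow> 'a::zero_neq_one^'n^'n \<Rightarrow> 'a^'n^'n" where
  "pad K M = (\<chi> i j. if i \<in> K \<and> j \<in> K then M$i$j else if i = j then 1 else 0)"


lemma pad_mult1:
  fixes M N :: "'a::comm_ring_1^'n^'n"
  assumes "\<And>l j. l \<notin> K \<Longrightarrow> j \<in> K \<Longrightarrow> N$l$j = 0"
  shows "pad K (M ** N) = pad K M ** pad K N"
  unfolding vec_eq_iff
proof (intro allI)
  fix i j
  show "pad K (M ** N) $ i $ j = (pad K M ** pad K N) $ i $ j"
  proof (cases "i \<in> K")
    case True
    show ?thesis
    proof (cases "j \<in> K")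
      case True
      have "(M ** N)$i$j = (\<Sum>l\<in>UNIV. if l \<in> K then M$i$l * N$l$j else 0)"
        unfolding matrix_matrix_mult_def using assms True by (auto intro!: sum.cong)
      moreover have "(pad K M ** pad K N) $ i $ j = (\<Sum>l\<in>UNIV. if l \<in> K then M$i$l * N$l$j else 0)"
        unfolding matrix_matrix_mult_def pad_def using \<open>i \<in> K\<close> True by (auto intro!: sum.cong)
      ultimately show ?thesis using \<open>i \<in> K\<close> True by (simp add: pad_def)
    next
      case False
      have "(pad K M ** pad K N) $ i $ j = (\<Sum>l\<in>UNIV. if l = j then pad K M $ i $ l else 0)"
        unfolding matrix_matrix_mult_def vec_lambda_beta by (rule sum.cong) (use False in \<open>auto simp: pad_def\<close>)
      then show ?thesis using \<open>i \<in> K\<close> False by (simp add: pad_def)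
    qed
  next
    case False
    have "(pad K M ** pad K N) $ i $ j = (\<Sum>l\<in>UNIV. if l = i then pad K N $ l $ j else 0)"
      unfolding matrix_matrix_mult_def vec_lambda_beta by (rule sum.cong) (use False in \<open>auto simp: pad_def\<close>)
    then show ?thesis using False by (simp add: pad_def)
  qed
qed

lemma pad_mult2:
  fixes M N :: "'a::comm_ring_1^'n^'n"
  assumes "\<And>l j. l \<notin> K \<Longrightarrow> j \<in> K \<Longrightarrow> M$j$l = 0"
  shows "pad K (M ** N) = pad K M ** pad K N"
  unfolding vec_eq_iff
proof (intro allI)
  fix i j
  show "pad K (M ** N) $ i $ j = (pad K M ** pad K N) $ i $ j"
  proof (cases "i \<in> K")
    case True
    show ?thesis
    proof (cases "j \<in> K")
      case True
      have "(M ** N)$i$j = (\<Sum>l\<in>UNIV. if l \<in> K then M$i$l * N$l$j else 0)"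
        unfolding matrix_matrix_mult_def using assms \<open>i \<in> K\<close> by (auto intro!: sum.cong)
      moreover have "(pad K M ** pad K N) $ i $ j = (\<Sum>l\<in>UNIV. if l \<in> K then M$i$l * N$l$j else 0)"
        unfolding matrix_matrix_mult_def pad_def using \<open>i \<in> K\<close> True by (auto intro!: sum.cong)
      ultimately show ?thesis using \<open>i \<in> K\<close> True by (simp add: pad_def)
    next
      case False
      have "(pad K M ** pad K N) $ i $ j = (\<Sum>l\<in>UNIV. if l = j then pad K M $ i $ l else 0)"
        unfolding matrix_matrix_mult_def vec_lambda_beta by (rule sum.cong) (use False in \<open>auto simp: pad_def\<close>)
      moreover have "(M ** N)$i$j = (\<Sum>l\<in>UNIV. if l \<in> K then M$i$l * N$l$j else 0)"
        unfolding matrix_matrix_mult_def using assms \<open>i \<in> K\<close> by (auto intro!: sum.cong)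
      ultimately show ?thesis using \<open>i \<in> K\<close> False by (simp add: pad_def)
    qed
  next
    case False
    have "(pad K M ** pad K N) $ i $ j = (\<Sum>l\<in>UNIV. if l = i then pad K N $ l $ j else 0)"
      unfolding matrix_matrix_mult_def vec_lambda_beta by (rule sum.cong) (use False in \<open>auto simp: pad_def\<close>)
    then show ?thesis using False by (simp add: pad_def)
  qed
qed

definition S_mat :: "int^2^2" where
  "S_mat = vector [vector [0, -1], vector [1, 0]]"

lemma S_SL: "S_mat \<in> SL2Z" and T_SL: "T_mat \<in> SL2Z"
  by (auto simp: SL2Z_def det_2 S_mat_def T_mat_def)

lemma SL_mult: "A \<in> SL2Z \<Longrightarrow> B \<in> SL2Z \<Longrightarrow> A ** B \<in> SL2Z"
  by (simp add: SL2Z_def det_mul)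

lemma mm2: "((A::int^2^2) ** B) $ i $ j = A$i$1 * B$1$j + A$i$2 * B$2$j"
  by (simp add: matrix_matrix_mult_def sum_2)

lemma S4: "S_mat ** S_mat ** S_mat ** S_mat = mat 1"
  by (simp add: vec_eq_iff forall_2 mm2 S_mat_def mat_def)

lemma S2: "S_mat ** S_mat = (S_mat ** T_mat) ** (S_mat ** T_mat) ** (S_mat ** T_mat)"
  by (simp add: vec_eq_iff forall_2 mm2 S_mat_def T_mat_def)
lemma char_T12:
  fixes chi :: "int^2^2 \<Rightarrow> complex"
  assumes mult: "\<And>A B. A \<in> SL2Z \<Longrightarrow> B \<in> SL2Z \<Longrightarrow> chi (A ** B) = chi A * chi B"
    and one: "chi (mat 1) = 1"
  shows "chi T_mat ^ 12 = 1"
proof -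
  define s where "s = chi S_mat"
  define t where "t = chi T_mat"
  have SS: "S_mat ** S_mat \<in> SL2Z" "S_mat ** S_mat ** S_mat \<in> SL2Z" "S_mat ** T_mat \<in> SL2Z"
    "S_mat ** T_mat ** (S_mat ** T_mat) \<in> SL2Z"
    using S_SL T_SL SL_mult by blast+
  have "chi (S_mat ** S_mat ** S_mat ** S_mat) = s * s * s * s"
    using mult[OF SS(2) S_SL] mult[OF SS(1) S_SL] mult[OF S_SL S_SL] s_def by simp
  then have s4: "s * s * s * s = 1" using S4 one by simp
  have e1: "chi (S_mat ** S_mat) = s * s" using mult[OF S_SL S_SL] s_def by simp
  have e2: "chi (S_mat ** T_mat ** (S_mat ** T_mat) ** (S_mat ** T_mat)) = (s * t)*(s * t)*(s * t)"
    using mult[OF SS(4) SS(3)] mult[OF SS(3) SS(3)] mult[OF S_SL T_SL] s_def t_def by simp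
  have st: "s * s = (s * t)*(s * t)*(s * t)" using e1 e2 S2 by simp
  have "s \<noteq> 0" using s4 by auto
  have "s * s * (s * t * t * t) = s * s * 1" using st by (simp add: algebra_simps)
  then have "s * t * t * t = 1" using \<open>s \<noteq> 0\<close> by simp
  then have "(s * t * t * t)^4 = 1" by simp
  then have "(s * s * s * s) * t^12 = 1" by (simp add: algebra_simps eval_nat_numeral)
  then show ?thesis using s4 t_def by simp
qed

lemma mv_axis: "(A *v axis j (1::'a::comm_ring_1)) = (\<chi> i. A $ i $ j)"
  by (simp add: vec_eq_iff matrix_vector_mult_def axis_def if_distrib cong: if_cong)

lemma pad_split:
  fixes B :: "'a::comm_ring_1^'n^'n"
  assumes "\<And>l j. l \<in> K \<Longrightarrow> j \<notin> K \<Longrightarrow> B$l$j = 0"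
  shows "B = pad K B ** (\<chi> i j. if i \<in> K \<and> j \<in> K then (if i = j then 1 else 0) else B$i$j)"
    (is "_ = _ ** ?Y")
  unfolding vec_eq_iff
proof (intro allI)
  fix i j
  show "B $ i $ j = (pad K B ** ?Y) $ i $ j"
  proof (cases "i \<in> K")
    case True
    have "(pad K B ** ?Y) $ i $ j = (\<Sum>l\<in>UNIV. if l \<in> K then B$i$l * ?Y$l$j else 0)"
      unfolding matrix_matrix_mult_def vec_lambda_beta by (rule sum.cong) (use True in \<open>auto simp: pad_def\<close>)
    also have "\<dots> = (\<Sum>l\<in>UNIV. if l = j then B$i$l else 0)"
      by (rule sum.cong) (use True assms in auto)
    finally show ?thesis by simp
  next
    case False
    have "(pad K B ** ?Y) $ i $ j = (\<Sum>l\<in>UNIV. if l = i then ?Y $ l $ j else 0)"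
      unfolding matrix_matrix_mult_def vec_lambda_beta by (rule sum.cong) (use False in \<open>auto simp: pad_def\<close>)
    then show ?thesis using False by simp
  qed
qed

theorem lemma5p2:
  fixes \<rho> :: "int^2^2 \<Rightarrow> complex^'n^'n"
    and lam :: "'n \<Rightarrow> complex"
    and P :: "complex^'n^'n"
  assumes rep: "is_rep \<rho>"
    and P_inv: "invertible P"
    and diag: "P ** \<rho> T_mat ** matrix_inv P = (\<chi> i j. if i = j then lam i else 0)"
    and no_root: "\<And>I. I \<noteq> {} \<Longrightarrow> I \<noteq> UNIV \<Longrightarrow> (\<Prod>i\<in>I. lam i) ^ 12 \<noteq> 1"
  shows "irreducible_rep \<rho>"
  unfolding irreducible_rep_def
proof (intro allI impI)
  fix W :: "(complex^'n) set"
  assume Wa: "vec.subspace W \<and> (\<forall>g\<in>SL2Z. \<forall>w\<in>W. \<rho> g *v w \<in> W)"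
  then have subW: "vec.subspace W" and invW: "\<And>g w. g \<in> SL2Z \<Longrightarrow> w \<in> W \<Longrightarrow> \<rho> g *v w \<in> W"
    by auto
  show "W = {0} \<or> W = UNIV"
  proof (rule ccontr)
    assume nt: "\<not> (W = {0} \<or> W = UNIV)"
    define Pinv where "Pinv = matrix_inv P"
    have PP: "P ** Pinv = mat 1" "Pinv ** P = mat 1" using minv[OF P_inv] Pinv_def by auto
    define D :: "complex^'n^'n" where "D = (\<chi> i j. if i = j then lam i else 0)"
    define \<sigma> where "\<sigma> g = P ** \<rho> g ** Pinv" for g
    have rhomult: "\<And>A B. A \<in> SL2Z \<Longrightarrow> B \<in> SL2Z \<Longrightarrow> \<rho> (A ** B) = \<rho> A ** \<rho> B"
      using rep unfolding is_rep_def by blast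
    have sigmult: "\<sigma> (A ** B) = \<sigma> A ** \<sigma> B" if "A \<in> SL2Z" "B \<in> SL2Z" for A B
    proof -
      have "\<sigma> A ** \<sigma> B = P ** (\<rho> A ** (Pinv ** P) ** \<rho> B) ** Pinv"
        by (simp add: \<sigma>_def matrix_mul_assoc)
      also have "\<dots> = P ** (\<rho> A ** \<rho> B) ** Pinv" by (simp add: PP)
      finally show ?thesis using rhomult[OF that] by (simp add: \<sigma>_def)
    qed
    have sigT: "\<sigma> T_mat = D" using diag by (simp add: \<sigma>_def D_def Pinv_def)
    have rhoI: "\<rho> (mat 1) = mat 1"
    proof -
      have I: "(mat 1 :: int^2^2) \<in> SL2Z" by (simp add: SL2Z_def)
      have inv: "invertible (\<rho> (mat 1))" using rep I unfolding is_rep_def by blast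
      have "\<rho> (mat 1) = \<rho> (mat 1) ** \<rho> (mat 1)" using rhomult[OF I I] by simp
      then have "matrix_inv (\<rho> (mat 1)) ** \<rho> (mat 1) = matrix_inv (\<rho> (mat 1)) ** (\<rho> (mat 1) ** \<rho> (mat 1))"
        by simp
      then show ?thesis by (simp add: matrix_mul_assoc minv[OF inv])
    qed
    have PvInj: "\<And>x y. P *v x = P *v y \<Longrightarrow> x = y"
      by (metis PP(2) matrix_vector_mul_assoc matrix_vector_mul_lid)
    define W' where "W' = (\<lambda>x. P *v x) ` W"
    have subW': "vec.subspace W'" unfolding W'_def by (rule vec.subspace_image[OF subW])
    have invW': "\<sigma> g *v v \<in> W'" if gv: "g \<in> SL2Z" "v \<in> W'" for g v
    proof -
      obtain w where w: "w \<in> W" "v = P *v w" using gv(2) W'_def by auto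
      have "\<sigma> g *v v = P *v (\<rho> g *v w)"
        by (simp add: w \<sigma>_def matrix_vector_mul_assoc flip: matrix_mul_assoc) (simp add: matrix_mul_assoc PP)
      then show ?thesis using invW[OF gv(1) w(1)] W'_def by auto
    qed
    obtain C where C: "C \<subseteq> W'" "vec.independent C" "W' \<subseteq> vec.span C"
      using vec.maximal_independent_subset by blast
    have spanC: "vec.span C = W'" using vec.span_subspace[OF C(1) C(3) subW'] .
    obtain B0 where B0: "C \<subseteq> B0" "B0 \<subseteq> C \<union> cart_basis" "vec.independent B0" "C \<union> cart_basis \<subseteq> vec.span B0"
      using vec.maximal_independent_subset_extend[of C "C \<union> cart_basis"] C(2) by blast
    have spanB0: "vec.span B0 = UNIV"
      using vec.span_mono[OF B0(4)] vec.span_Basis vec.span_span by (metis (no_types, lifting) le_sup_iff subset_antisym top_greatest vec.span_minimal vec.subspace_span B0(4))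
    have finB0: "finite B0" using vec.finiteI_independent[OF B0(3)] .
    have cardB0: "card B0 = CARD('n)"
      using vec.basis_card_eq_dim[of B0 UNIV] B0(3) spanB0 vec.dim_UNIV card_cart_basis by auto
    define J where "J = {i. axis i 1 \<in> B0 - C}"
    define K where "K = - J"
    have B0C: "B0 - C = (\<lambda>i. axis i 1) ` J"
    proof
      show "B0 - C \<subseteq> (\<lambda>i. axis i 1) ` J"
      proof
        fix x assume x: "x \<in> B0 - C"
        then have "x \<in> cart_basis" using B0(2) by auto
        then obtain i where "x = axis i 1" unfolding cart_basis_def by auto
        then show "x \<in> (\<lambda>i. axis i 1) ` J" using x J_def by auto
      qed
    qed (auto simp: J_def)
    have cardJ: "card (B0 - C) = card J"
      unfolding B0C by (rule card_image) (auto simp: inj_on_def axis_eq_axis)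
    have finC: "finite C" using finB0 B0(1) finite_subset by blast
    have "card B0 = card C + card (B0 - C)"
      using card_Diff_subset[OF finC B0(1)] card_mono[OF finB0 B0(1)] by simp
    then have cardK: "card K = card C"
    proof -
      have "card K = CARD('n) - card J"
        unfolding K_def Compl_eq_Diff_UNIV by (rule card_Diff_subset) auto
      then show ?thesis using cardJ cardB0 \<open>card B0 = card C + card (B0 - C)\<close> by simp
    qed
    obtain f where f: "bij_betw f K C"
      using finite_same_card_bij[of K C] cardK finC by auto
    define col where "col j = (if j \<in> K then f j else axis j 1)" for j
    define B :: "complex^'n^'n" where "B = (\<chi> i j. col j $ i)"
    have Bax: "B *v axis j 1 = col j" for j
      by (simp add: mv_axis B_def vec_eq_iff)
    have colK: "col ` K = C" using f by (simp add: col_def bij_betw_def)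
    have colJ: "col ` J = B0 - C" using B0C by (auto simp: col_def K_def)
    have "columns B = B0"
    proof -
      have "columns B = range col" unfolding columns_def column_def B_def by auto
      also have "\<dots> = col ` K \<union> col ` J" using K_def by auto
      also have "\<dots> = B0" using colK colJ B0(1) by auto
      finally show ?thesis .
    qed
    then have "\<exists>X. B ** X = mat 1" using matrix_right_invertible_span_columns spanB0 by metis
    then have Binv: "invertible B" using invertible_right_inverse by blast
    define Bi where "Bi = matrix_inv B"
    have BB: "B ** Bi = mat 1" "Bi ** B = mat 1" using minv[OF Binv] Bi_def by auto
    define N where "N g = Bi ** \<sigma> g ** B" for g
    define Z where "Z = {v :: complex^'n. \<forall>l. l \<notin> K \<longrightarrow> v $ l = 0}"
    have subZ: "vec.subspace Z" unfolding Z_def vec.subspace_def by auto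
    have W'sub: "W' \<subseteq> (\<lambda>x. B *v x) ` Z"
    proof -
      have "C \<subseteq> (\<lambda>x. B *v x) ` Z"
      proof
        fix c assume "c \<in> C"
        then obtain j where j: "j \<in> K" "c = col j" using colK by auto
        have "axis j 1 \<in> Z" using j(1) by (auto simp: Z_def axis_def)
        then show "c \<in> (\<lambda>x. B *v x) ` Z" using j Bax[of j] by (metis image_eqI)
      qed
      then have "vec.span C \<subseteq> (\<lambda>x. B *v x) ` Z"
        by (rule vec.span_minimal) (rule vec.subspace_image[OF subZ])
      then show ?thesis using spanC by simp
    qed
    have pres: "N g $ l $ j = 0" if g: "g \<in> SL2Z" and l: "l \<notin> K" and j: "j \<in> K" for g l j
    proof -
      have "col j \<in> C" using colK j by auto
      then have "\<sigma> g *v col j \<in> W'" using invW'[OF g] C(1) by auto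
      then obtain y where y: "y \<in> Z" "\<sigma> g *v col j = B *v y" using W'sub by auto
      have "N g *v axis j 1 = Bi *v (\<sigma> g *v (B *v axis j 1))"
        by (simp add: N_def matrix_vector_mul_assoc matrix_mul_assoc)
      also have "\<dots> = y" by (simp add: Bax y(2) matrix_vector_mul_assoc BB)
      finally have "(N g *v axis j 1) $ l = 0" using y(1) l Z_def by auto
      then show ?thesis by (simp add: mv_axis)
    qed
    have Nmult: "N (A ** A') = N A ** N A'" if "A \<in> SL2Z" "A' \<in> SL2Z" for A A'
    proof -
      have "N A ** N A' = Bi ** (\<sigma> A ** (B ** Bi) ** \<sigma> A') ** B"
        by (simp add: N_def matrix_mul_assoc)
      also have "\<dots> = Bi ** (\<sigma> A ** \<sigma> A') ** B" by (simp add: BB)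
      finally show ?thesis using sigmult[OF that] by (simp add: N_def)
    qed
    define chi where "chi g = det (pad K (N g))" for g
    have chimult: "chi (A ** A') = chi A * chi A'" if "A \<in> SL2Z" "A' \<in> SL2Z" for A A'
      unfolding chi_def Nmult[OF that]
      by (subst pad_mult1) (auto intro: pres[OF that(2)] simp: det_mul)
    have chione: "chi (mat 1) = 1"
    proof -
      have "N (mat 1) = mat 1" by (simp add: N_def \<sigma>_def rhoI PP BB)
      moreover have "pad K (mat 1) = (mat 1 :: complex^'n^'n)"
        by (simp add: pad_def mat_def vec_eq_iff)
      ultimately show ?thesis by (simp add: chi_def)
    qed
    have chiT12: "chi T_mat ^ 12 = 1" by (rule char_T12[OF chimult chione])
    have BNT: "B ** N T_mat = D ** B"
    proof -
      have "B ** N T_mat = (B ** Bi) ** D ** B" by (simp add: N_def sigT matrix_mul_assoc)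
      then show ?thesis by (simp add: BB)
    qed
    have Bzero: "B $ l $ j = 0" if "l \<in> K" "j \<notin> K" for l j
      using that by (auto simp: B_def col_def axis_def)
    have e1: "pad K (B ** N T_mat) = pad K B ** pad K (N T_mat)"
      by (rule pad_mult1) (rule pres[OF T_SL])
    have e2: "pad K (D ** B) = pad K D ** pad K B"
      by (rule pad_mult2) (auto simp: D_def)
    have "pad K B ** pad K (N T_mat) = pad K D ** pad K B"
      using e1 e2 BNT by simp
    then have eq: "det (pad K B) * chi T_mat = det (pad K D) * det (pad K B)"
      by (metis chi_def det_mul)
    have "det B = det (pad K B) * det (\<chi> i j. if i \<in> K \<and> j \<in> K then (if i = j then 1 else 0) else B$i$j)"
      by (subst pad_split[of K B, OF Bzero]) (auto simp: det_mul)
    moreover have "det B \<noteq> 0" using Binv invertible_det_nz by blast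
    ultimately have "det (pad K B) \<noteq> 0" by auto
    with eq have chiT: "chi T_mat = det (pad K D)" by simp
    have "det (pad K D) = (\<Prod>i\<in>UNIV. if i \<in> K then lam i else 1)"
      by (subst det_diagonal) (auto simp: pad_def D_def intro!: prod.cong)
    also have "\<dots> = (\<Prod>i\<in>K. lam i)"
      by (simp add: prod.If_cases)
    finally have prodK: "(\<Prod>i\<in>K. lam i) ^ 12 = 1" using chiT chiT12 by simp
    have "K \<noteq> {}"
    proof
      assume "K = {}"
      then have "C = {}" using colK by auto
      then have "W' = {0}" using spanC by simp
      moreover obtain w where "w \<in> W" "w \<noteq> 0" using nt vec.subspace_0[OF subW] by blast
      moreover have "P *v w \<in> W'" using \<open>w \<in> W\<close> W'_def by auto
      ultimately show False using PvInj[of w 0] by simp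
    qed
    moreover have "K \<noteq> UNIV"
    proof
      assume "K = UNIV"
      then have "J = {}" using K_def by auto
      then have "B0 \<subseteq> C" using B0C by auto
      then have "W' = UNIV" using spanB0 spanC vec.span_mono by blast
      then have "W = UNIV"
      proof -
        have "v \<in> W" for v
        proof -
          have "P *v v \<in> W'" using \<open>W' = UNIV\<close> by simp
          then obtain w where "w \<in> W" "P *v v = P *v w" using W'_def by auto
          then show ?thesis using PvInj by metis
        qed
        then show ?thesis by auto
      qed
      then show False using nt by simp
    qed
    ultimately show False using no_root prodK by blast
  qed
qed

end
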